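(* Let $V = W_0 \oplus W \oplus W_1$ be a finite-dimensional real vector space written as a direct sum of subspaces with $W \neq \{0\}$, and let $V_0 = W_0 + W$, $V_1 = W + W_1$. Let $\Gamma_0, \Gamma_1 \leq \operatorname{GL}(V)$ be groups such that for $i = 0,1$: (1) $\Gamma_i V_i = V_i$ and the representation of $\Gamma_i$ on $V_i$ is irreducible; (2) $\Gamma_i$ acts trivially on $W_{1-i}$, i.e. $\gamma w = w$ for all $\gamma \in \Gamma_i$ and $w \in W_{1-i}$. Then the action of the group $\Gamma = \langle \Gamma_0 \cup \Gamma_1 \rangle$ on $V$ is irreducible. *)

theory Defs
  imports "HOL-Analysis.Analysis"
begin

text \<open>A finite-dimensional real vector space is modelled by a type of class euclidean_space.
  GL(V) is the set of invertible linear self-maps.\<close>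

definition GL :: "('a::real_vector \<Rightarrow> 'a) set" where
  "GL = {f. linear f \<and> bij f}"

definition is_subgroup_GL :: "('a::real_vector \<Rightarrow> 'a) set \<Rightarrow> bool" where
  "is_subgroup_GL G \<longleftrightarrow> G \<subseteq> GL \<and> id \<in> G \<and>
     (\<forall>f\<in>G. \<forall>g\<in>G. f \<circ> g \<in> G) \<and> (\<forall>f\<in>G. inv f \<in> G)"

inductive_set gen_group :: "('a \<Rightarrow> 'a) set \<Rightarrow> ('a \<Rightarrow> 'a) set" for S where
  gen_id: "id \<in> gen_group S"
| gen_base: "s \<in> S \<Longrightarrow> s \<in> gen_group S"
| gen_inv: "s \<in> S \<Longrightarrow> inv s \<in> gen_group S"
| gen_comp: "f \<in> gen_group S \<Longrightarrow> g \<in> gen_group S \<Longrightarrow> f \<circ> g \<in> gen_group S"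

definition irreducible_on :: "('a::real_vector \<Rightarrow> 'a) set \<Rightarrow> 'a set \<Rightarrow> bool" where
  "irreducible_on G U \<longleftrightarrow> subspace U \<and> U \<noteq> {0} \<and>
     (\<forall>U'. subspace U' \<and> U' \<subseteq> U \<and> (\<forall>g\<in>G. g ` U' \<subseteq> U') \<longrightarrow> U' = {0} \<or> U' = U)"

end

theory Submission
  imports Defs
begin

theorem lemmaA4:
  fixes W0 W W1 :: "'a::euclidean_space set"
    and \<Gamma>0 \<Gamma>1 :: "('a \<Rightarrow> 'a) set"
  assumes "subspace W0" and "subspace W" and "subspace W1"
    and "{a + b + c | a b c. a \<in> W0 \<and> b \<in> W \<and> c \<in> W1} = UNIV"
    and "\<And>a b c. a \<in> W0 \<Longrightarrow> b \<in> W \<Longrightarrow> c \<in> W1 \<Longrightarrow> a + b + c = 0 \<Longrightarrow>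
           a = 0 \<and> b = 0 \<and> c = 0"
    and "W \<noteq> {0}"
    and "V0 = {a + b | a b. a \<in> W0 \<and> b \<in> W}"
    and "V1 = {b + c | b c. b \<in> W \<and> c \<in> W1}"
    and "is_subgroup_GL \<Gamma>0" and "is_subgroup_GL \<Gamma>1"
    and "\<forall>g\<in>\<Gamma>0. g ` V0 = V0" and "irreducible_on \<Gamma>0 V0"
    and "\<forall>g\<in>\<Gamma>1. g ` V1 = V1" and "irreducible_on \<Gamma>1 V1"
    and "\<forall>g\<in>\<Gamma>0. \<forall>w\<in>W1. g w = w"
    and "\<forall>g\<in>\<Gamma>1. \<forall>w\<in>W0. g w = w"
  shows "irreducible_on (gen_group (\<Gamma>0 \<union> \<Gamma>1)) UNIV"
proof -
  note A = assms
  have irr: "\<And>G V U'. irreducible_on G V \<Longrightarrow> subspace U' \<Longrightarrow> U' \<subseteq> V \<Longrightarrow> (\<forall>g\<in>G. g ` U' \<subseteq> U') \<Longrightarrow> U' = {0} \<or> U' = V"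
    by (simp add: irreducible_on_def)
  have sV0: "subspace V0" using A(1,2,7) subspace_sums by blast
  have sV1: "subspace V1" using A(2,3,8) subspace_sums by blast
  have WV0: "W \<subseteq> V0"
  proof
    fix x assume "x \<in> W" thus "x \<in> V0" unfolding A(7) using subspace_0[OF A(1)] by (metis (mono_tags, lifting) add_0_left mem_Collect_eq)
  qed
  have WV1: "W \<subseteq> V1"
  proof
    fix x assume "x \<in> W" thus "x \<in> V1" unfolding A(8) using subspace_0[OF A(3)] by (metis (mono_tags, lifting) add_0_right mem_Collect_eq)
  qed
  have W0V0: "W0 \<subseteq> V0"
  proof
    fix x assume "x \<in> W0" thus "x \<in> V0" unfolding A(7) using subspace_0[OF A(2)] by (metis (mono_tags, lifting) add_0_right mem_Collect_eq)
  qed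
  have W1V1: "W1 \<subseteq> V1"
  proof
    fix x assume "x \<in> W1" thus "x \<in> V1" unfolding A(8) using subspace_0[OF A(2)] by (metis (mono_tags, lifting) add_0_left mem_Collect_eq)
  qed
  have lin0: "\<And>g. g \<in> \<Gamma>0 \<Longrightarrow> linear g" using A(9) unfolding is_subgroup_GL_def GL_def by blast
  have ne: "(UNIV::'a set) \<noteq> {0}" using A(6) by blast
  show ?thesis unfolding irreducible_on_def
  proof (intro conjI allI impI subspace_UNIV ne)
    fix U :: "'a set"
    assume H: "subspace U \<and> U \<subseteq> UNIV \<and> (\<forall>g\<in>gen_group (\<Gamma>0 \<union> \<Gamma>1). g ` U \<subseteq> U)"
    hence sU: "subspace U" and inv0: "\<And>g. g \<in> \<Gamma>0 \<Longrightarrow> g ` U \<subseteq> U"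
      and inv1: "\<And>g. g \<in> \<Gamma>1 \<Longrightarrow> g ` U \<subseteq> U"
      by (auto intro: gen_group.gen_base)
    have c0: "U \<inter> V0 = {0} \<or> U \<inter> V0 = V0"
    proof -
      have "subspace (U \<inter> V0)" using sU sV0 subspace_inter by blast
      moreover have "\<forall>g\<in>\<Gamma>0. g ` (U \<inter> V0) \<subseteq> U \<inter> V0" using inv0 A(11) by blast
      ultimately show ?thesis by (intro irr[OF A(12)]) auto
    qed
    have c1: "U \<inter> V1 = {0} \<or> U \<inter> V1 = V1"
    proof -
      have "subspace (U \<inter> V1)" using sU sV1 subspace_inter by blast
      moreover have "\<forall>g\<in>\<Gamma>1. g ` (U \<inter> V1) \<subseteq> U \<inter> V1" using inv1 A(13) by blast
      ultimately show ?thesis by (intro irr[OF A(14)]) auto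
    qed
    obtain w where w: "w \<in> W" "w \<noteq> 0" using A(6) A(2) subspace_0 by blast
    show "U = {0} \<or> U = UNIV"
    proof (cases "U \<inter> V0 = V0 \<or> U \<inter> V1 = V1")
      case True
      have "w \<in> U" using True w WV0 WV1 by blast
      hence both: "V0 \<subseteq> U \<and> V1 \<subseteq> U" using c0 c1 w WV0 WV1 by blast
      have "U = UNIV"
      proof
        show "UNIV \<subseteq> U"
        proof
          fix x :: 'a
          have "x \<in> {a + b + c | a b c. a \<in> W0 \<and> b \<in> W \<and> c \<in> W1}" using A(4) by simp
          then obtain a b c where abc: "x = a + b + c" "a \<in> W0" "b \<in> W" "c \<in> W1" by blast
          have "a + b \<in> U" using abc both A(7) by blast
          moreover have "c \<in> U" using abc both W1V1 by blast
          ultimately show "x \<in> U" using abc sU subspace_add by blast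
        qed
      qed simp
      thus ?thesis by blast
    next
      case False
      hence z0: "U \<inter> V0 = {0}" and z1: "U \<inter> V1 = {0}" using c0 c1 by auto
      have "U \<subseteq> {0}"
      proof
        fix u assume uU: "u \<in> U"
        have "u \<in> {a + b + c | a b c. a \<in> W0 \<and> b \<in> W \<and> c \<in> W1}" using A(4) by simp
        then obtain a b c where abc: "u = a + b + c" "a \<in> W0" "b \<in> W" "c \<in> W1" by blast
        have abV0: "a + b \<in> V0" using abc A(7) by blast
        have fix0: "g (a + b) = a + b" if g: "g \<in> \<Gamma>0" for g
        proof -
          have "g u - u = g (a + b) - (a + b)"
            using abc lin0[OF g] A(15) g by (simp add: linear_add)
          moreover have "g u - u \<in> U" using inv0[OF g] uU sU subspace_diff by blast
          moreover have "g (a + b) - (a + b) \<in> V0" using A(11) g abV0 sV0 subspace_diff by blast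
          ultimately have "g (a + b) - (a + b) \<in> U \<inter> V0" by simp
          hence "g (a + b) - (a + b) = 0" using z0 by blast
          thus ?thesis by simp
        qed
        show "u \<in> {0}"
        proof (cases "a + b = 0")
          case True
          hence "u = c" using abc by (simp add: add.assoc)
          thus ?thesis using z1 uU W1V1 abc by blast
        next
          case False
          let ?L = "span {a + b}"
          have "?L \<subseteq> V0" using abV0 sV0 by (simp add: span_minimal)
          moreover have "\<forall>g\<in>\<Gamma>0. g ` ?L \<subseteq> ?L"
          proof
            fix g assume g: "g \<in> \<Gamma>0"
            show "g ` ?L \<subseteq> ?L"
            proof
              fix y assume "y \<in> g ` ?L"
              then obtain z where z: "z \<in> ?L" "y = g z" by blast
              then obtain k where "z = k *\<^sub>R (a + b)" by (auto simp: span_singleton)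
              hence "y = k *\<^sub>R (a + b)" using z fix0[OF g] lin0[OF g] by (simp add: linear_scale)
              thus "y \<in> ?L" by (simp add: span_mul span_base)
            qed
          qed
          moreover have "?L \<noteq> {0}" using False span_base by blast
          ultimately have L: "?L = V0" using irr[OF A(12), of ?L] by simp
          have W0z: "a = 0"
          proof -
            obtain t where t: "w = t *\<^sub>R (a + b)" using w WV0 L by (auto simp: span_singleton)
            have tnz: "t \<noteq> 0" using t w by auto
            obtain s where s: "a = s *\<^sub>R (a + b)" using abc W0V0 L by (auto simp: span_singleton)
            have "a = (s / t) *\<^sub>R w" using s t tnz by simp
            hence "(s / t) *\<^sub>R w \<in> W" and "a + (- ((s / t) *\<^sub>R w)) + 0 = 0"
              using w A(2) subspace_scale by auto
            moreover have "- ((s / t) *\<^sub>R w) \<in> W" using w A(2) subspace_scale subspace_neg by blast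
            ultimately show ?thesis using A(5)[of a "- ((s / t) *\<^sub>R w)" 0] abc A(3) subspace_0 by blast
          qed
          have "u \<in> V1" using abc W0z A(8) by auto
          thus ?thesis using z1 uU by blast
        qed
      qed
      thus ?thesis using sU subspace_0 by blast
    qed
  qed
qed

end
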